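(* Let $G$ be a plane graph rooted at edge $e$, and let $e'$ be the dual edge of $e$. Then $G$ has a fundamental cycle basis rooted at $e$ (i.e., there is a spanning tree $T$ of $G$ all of whose fundamental cycles contain $e$) if and only if the dual graph of $G$ has a Hamiltonian cycle containing $e'$.
   Context: A plane graph is a connected graph together with a crossing-free embedding in the plane. Its dual graph (possibly with multiple edges and self-loops) has a vertex for each face (including the unbounded face) and, for each edge $f$ of $G$, a dual edge connecting the faces on the two sides of $f$. For a spanning tree $T$, the fundamental cycle of a non-tree edge $f$ is $f$ together with the unique path in $T$ between the endpoints of $f$; the fundamental cycle basis of $T$ is the set of these cycles. A Hamiltonian cycle is a cycle through every vertex. *)

theory Defs
  imports Main "HOL-Combinatorics.Permutations" "HOL-Combinatorics.Orbits"
begin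

text \<open>ends e is the set of endpoints of edge e (one element for a loop).\<close>

definition is_walk :: "'v set \<Rightarrow> 'e set \<Rightarrow> ('e \<Rightarrow> 'v set) \<Rightarrow> 'v list \<Rightarrow> 'e list \<Rightarrow> bool" where
  "is_walk V E ends vs es \<longleftrightarrow>
     length vs = Suc (length es) \<and> set vs \<subseteq> V \<and> set es \<subseteq> E \<and>
     (\<forall>i < length es. ends (es ! i) = {vs ! i, vs ! Suc i})"

definition is_path :: "'v set \<Rightarrow> 'e set \<Rightarrow> ('e \<Rightarrow> 'v set) \<Rightarrow> 'v \<Rightarrow> 'v \<Rightarrow> 'v list \<Rightarrow> 'e list \<Rightarrow> bool" where
  "is_path V E ends u v vs es \<longleftrightarrow>
     is_walk V E ends vs es \<and> hd vs = u \<and> last vs = v \<and> distinct vs"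

text \<open>A cycle: closed walk of length at least 1 with distinct edges and distinct vertices
  (apart from first = last). Loops are cycles of length 1, two parallel edges a cycle of length 2.\<close>
definition is_cycle :: "'v set \<Rightarrow> 'e set \<Rightarrow> ('e \<Rightarrow> 'v set) \<Rightarrow> 'v list \<Rightarrow> 'e list \<Rightarrow> bool" where
  "is_cycle V E ends vs es \<longleftrightarrow>
     is_walk V E ends vs es \<and> es \<noteq> [] \<and> last vs = hd vs \<and>
     distinct es \<and> distinct (butlast vs)"

definition is_hamiltonian_cycle :: "'v set \<Rightarrow> 'e set \<Rightarrow> ('e \<Rightarrow> 'v set) \<Rightarrow> 'v list \<Rightarrow> 'e list \<Rightarrow> bool" where
  "is_hamiltonian_cycle V E ends vs es \<longleftrightarrow> is_cycle V E ends vs es \<and> set vs = V"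

definition graph_connected :: "'v set \<Rightarrow> 'e set \<Rightarrow> ('e \<Rightarrow> 'v set) \<Rightarrow> bool" where
  "graph_connected V E ends \<longleftrightarrow>
     (\<forall>u\<in>V. \<forall>v\<in>V. \<exists>vs es. is_walk V E ends vs es \<and> hd vs = u \<and> last vs = v)"

definition spanning_tree :: "'v set \<Rightarrow> 'e set \<Rightarrow> ('e \<Rightarrow> 'v set) \<Rightarrow> 'e set \<Rightarrow> bool" where
  "spanning_tree V E ends T \<longleftrightarrow>
     T \<subseteq> E \<and> graph_connected V T ends \<and> (\<nexists>vs es. is_cycle V T ends vs es)"

definition tree_path_edges :: "'v set \<Rightarrow> 'e set \<Rightarrow> ('e \<Rightarrow> 'v set) \<Rightarrow> 'v \<Rightarrow> 'v \<Rightarrow> 'e set" where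
  "tree_path_edges V T ends u v = (THE P. \<exists>vs es. is_path V T ends u v vs es \<and> P = set es)"

definition fundamental_cycle :: "'v set \<Rightarrow> ('e \<Rightarrow> 'v set) \<Rightarrow> 'e set \<Rightarrow> 'e \<Rightarrow> 'e set" where
  "fundamental_cycle V ends T f =
     insert f (\<Union>{tree_path_edges V T ends u v | u v. ends f = {u, v}})"

text \<open>Darts D, fixed-point-free involution alpha (the two darts of an edge),
  rotation sigma (cyclic order of darts around each vertex).\<close>

definition map_vertex :: "('d \<Rightarrow> 'd) \<Rightarrow> 'd \<Rightarrow> 'd set" where
  "map_vertex \<sigma> d = orbit \<sigma> d"

definition map_face :: "('d \<Rightarrow> 'd) \<Rightarrow> ('d \<Rightarrow> 'd) \<Rightarrow> 'd \<Rightarrow> 'd set" where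
  "map_face \<alpha> \<sigma> d = orbit (\<sigma> \<circ> \<alpha>) d"

definition map_vertices :: "'d set \<Rightarrow> ('d \<Rightarrow> 'd) \<Rightarrow> 'd set set" where
  "map_vertices D \<sigma> = map_vertex \<sigma> ` D"

definition map_edges :: "'d set \<Rightarrow> ('d \<Rightarrow> 'd) \<Rightarrow> 'd set set" where
  "map_edges D \<alpha> = (\<lambda>d. {d, \<alpha> d}) ` D"

definition map_faces :: "'d set \<Rightarrow> ('d \<Rightarrow> 'd) \<Rightarrow> ('d \<Rightarrow> 'd) \<Rightarrow> 'd set set" where
  "map_faces D \<alpha> \<sigma> = map_face \<alpha> \<sigma> ` D"

definition primal_ends :: "('d \<Rightarrow> 'd) \<Rightarrow> 'd set \<Rightarrow> 'd set set" where
  "primal_ends \<sigma> x = map_vertex \<sigma> ` x"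

text \<open>Endpoints of the dual edge of edge x: the faces on the two sides of x\<close>
definition dual_ends :: "('d \<Rightarrow> 'd) \<Rightarrow> ('d \<Rightarrow> 'd) \<Rightarrow> 'd set \<Rightarrow> 'd set set" where
  "dual_ends \<alpha> \<sigma> x = map_face \<alpha> \<sigma> ` x"

definition comb_map :: "'d set \<Rightarrow> ('d \<Rightarrow> 'd) \<Rightarrow> ('d \<Rightarrow> 'd) \<Rightarrow> bool" where
  "comb_map D \<alpha> \<sigma> \<longleftrightarrow> finite D \<and> \<alpha> permutes D \<and> \<sigma> permutes D \<and>
     (\<forall>d\<in>D. \<alpha> d \<noteq> d \<and> \<alpha> (\<alpha> d) = d)"

text \<open>A plane graph: a connected combinatorial map of genus 0 (Euler: V - E + F = 2).\<close>
definition plane_graph :: "'d set \<Rightarrow> ('d \<Rightarrow> 'd) \<Rightarrow> ('d \<Rightarrow> 'd) \<Rightarrow> bool" where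
  "plane_graph D \<alpha> \<sigma> \<longleftrightarrow> comb_map D \<alpha> \<sigma> \<and>
     graph_connected (map_vertices D \<sigma>) (map_edges D \<alpha>) (primal_ends \<sigma>) \<and>
     int (card (map_vertices D \<sigma>)) - int (card (map_edges D \<alpha>)) + int (card (map_faces D \<alpha> \<sigma>)) = 2"

definition simple_map :: "'d set \<Rightarrow> ('d \<Rightarrow> 'd) \<Rightarrow> ('d \<Rightarrow> 'd) \<Rightarrow> bool" where
  "simple_map D \<alpha> \<sigma> \<longleftrightarrow>
     (\<forall>d\<in>D. map_vertex \<sigma> d \<noteq> map_vertex \<sigma> (\<alpha> d)) \<and>
     (\<forall>x\<in>map_edges D \<alpha>. \<forall>y\<in>map_edges D \<alpha>. primal_ends \<sigma> x = primal_ends \<sigma> y \<longrightarrow> x = y)"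

end

theory Submission
  imports Defs
begin


lemma walk_mono:
  "is_walk V S ends vs es \<Longrightarrow> V \<subseteq> V' \<Longrightarrow> S \<subseteq> S' \<Longrightarrow> is_walk V' S' ends vs es"
  unfolding is_walk_def by auto

lemma cycle_mono:
  "is_cycle V S ends vs es \<Longrightarrow> V \<subseteq> V' \<Longrightarrow> S \<subseteq> S' \<Longrightarrow> is_cycle V' S' ends vs es"
  unfolding is_cycle_def using walk_mono by blast

lemma walk_take:
  assumes "is_walk V S ends vs es" "k \<le> length es"
  shows "is_walk V S ends (take (Suc k) vs) (take k es)"
  using assms unfolding is_walk_def
  by (auto dest: in_set_takeD simp: min_def)

lemma walk_snoc:
  assumes "is_walk V S ends vs es" "ends x = {last vs, w}" "w \<in> V" "x \<in> S"
  shows "is_walk V S ends (vs @ [w]) (es @ [x])"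
proof -
  have vs: "vs \<noteq> []" "length vs = Suc (length es)" using assms(1) unfolding is_walk_def by auto
  have lastv: "last vs = vs ! length es" using vs by (simp add: last_conv_nth)
  show ?thesis unfolding is_walk_def
  proof (intro conjI allI impI)
    fix i assume "i < length (es @ [x])"
    then have "i < length es \<or> i = length es" by auto
    then show "ends ((es @ [x]) ! i) = {(vs @ [w]) ! i, (vs @ [w]) ! Suc i}"
    proof
      assume "i < length es" then show ?thesis using assms(1) vs
        unfolding is_walk_def by (auto simp: nth_append)
    next
      assume "i = length es" then show ?thesis using assms(2) vs lastv
        by (auto simp: nth_append)
    qed
  qed (use assms in \<open>auto simp: is_walk_def\<close>)
qed

lemma walk_distinct_edges:
  assumes "is_walk V S ends vs es" "distinct vs"
  shows "distinct es"
proof -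
  { fix i j assume ij: "i < j" "j < length es" "es ! i = es ! j"
    have l: "length vs = Suc (length es)" using assms unfolding is_walk_def by auto
    have "{vs ! i, vs ! Suc i} = {vs ! j, vs ! Suc j}"
      using assms(1) ij unfolding is_walk_def by (metis order.strict_trans)
    then have "vs ! i = vs ! j \<or> vs ! i = vs ! Suc j" by blast
    moreover have "vs ! i \<noteq> vs ! j" using assms(2) ij l by (simp add: nth_eq_iff_index_eq)
    moreover have "vs ! i \<noteq> vs ! Suc j" using assms(2) ij l by (simp add: nth_eq_iff_index_eq)
    ultimately have False by blast }
  then show ?thesis unfolding distinct_conv_nth
    by (metis linorder_neqE_nat)
qed

locale mgraph =
  fixes V :: "'v set" and E :: "'e set" and ends :: "'e \<Rightarrow> 'v set"
  assumes finV: "finite V" and finE: "finite E"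
    and wf: "\<And>x. x \<in> E \<Longrightarrow> \<exists>u\<in>V. \<exists>v\<in>V. ends x = {u, v}"
begin

definition adjr :: "'e set \<Rightarrow> ('v \<times> 'v) set" where
  "adjr S = {(u, v). u \<in> V \<and> v \<in> V \<and> (\<exists>x\<in>S. ends x = {u, v})}"

definition conn :: "'e set \<Rightarrow> 'v \<Rightarrow> 'v \<Rightarrow> bool" where
  "conn S a b \<longleftrightarrow> a \<in> V \<and> (a, b) \<in> (adjr S)\<^sup>*"

definition acyclic :: "'e set \<Rightarrow> bool" where
  "acyclic S \<longleftrightarrow> \<not> (\<exists>vs es. is_cycle V S ends vs es)"

lemma conn_refl: "a \<in> V \<Longrightarrow> conn S a a"
  by (simp add: conn_def)

lemma conn_V: "conn S a b \<Longrightarrow> a \<in> V \<and> b \<in> V"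
  unfolding conn_def by (auto elim: rtranclE simp: adjr_def)

lemma adjr_sym: "(a, b) \<in> adjr S \<Longrightarrow> (b, a) \<in> adjr S"
  unfolding adjr_def by (auto simp: insert_commute)

lemma conn_sym: "conn S a b \<Longrightarrow> conn S b a"
proof -
  assume c: "conn S a b"
  have "(a, b) \<in> (adjr S)\<^sup>* \<Longrightarrow> (b, a) \<in> (adjr S)\<^sup>*"
    by (induction rule: rtrancl_induct) (auto intro: converse_rtrancl_into_rtrancl adjr_sym)
  then show ?thesis using c conn_V[OF c] by (auto simp: conn_def)
qed

lemma conn_trans: "conn S a b \<Longrightarrow> conn S b c \<Longrightarrow> conn S a c"
  unfolding conn_def by auto

lemma conn_mono: "conn S a b \<Longrightarrow> S \<subseteq> S' \<Longrightarrow> conn S' a b"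
proof -
  assume "conn S a b" "S \<subseteq> S'"
  moreover have "adjr S \<subseteq> adjr S'" using \<open>S \<subseteq> S'\<close> unfolding adjr_def by auto
  ultimately show ?thesis unfolding conn_def using rtrancl_mono by blast
qed

lemma conn_edge: "x \<in> S \<Longrightarrow> ends x = {u, v} \<Longrightarrow> u \<in> V \<Longrightarrow> v \<in> V \<Longrightarrow> conn S u v"
  unfolding conn_def adjr_def by auto

lemma walk_conn_idx:
  assumes "is_walk V S' ends vs es" "i \<le> j" "j \<le> length es"
    and "\<And>m. i \<le> m \<Longrightarrow> m < j \<Longrightarrow> es ! m \<in> S"
  shows "conn S (vs ! i) (vs ! j)"
  using assms(2-4)
proof (induction j)
  case 0
  then show ?case using assms(1) unfolding is_walk_def
    by (auto intro!: conn_refl)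
next
  case (Suc j)
  have l: "length vs = Suc (length es)" and sv: "set vs \<subseteq> V" using assms(1) unfolding is_walk_def by auto
  show ?case
  proof (cases "i = Suc j")
    case True then show ?thesis using sv l Suc.prems by (auto intro!: conn_refl)
  next
    case False
    then have ij: "i \<le> j" using Suc.prems by auto
    have c1: "conn S (vs ! i) (vs ! j)" using Suc ij by auto
    have "ends (es ! j) = {vs ! j, vs ! Suc j}" using assms(1) Suc.prems unfolding is_walk_def by auto
    moreover have "es ! j \<in> S" using Suc.prems ij by auto
    moreover have "vs ! j \<in> V" "vs ! Suc j \<in> V" using sv l Suc.prems by auto
    ultimately have "conn S (vs ! j) (vs ! Suc j)" using conn_edge by blast
    then show ?thesis using c1 conn_trans by blast
  qed
qed

lemma walk_conn:
  assumes "is_walk V S ends vs es"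
  shows "conn S (hd vs) (last vs)"
proof -
  have l: "length vs = Suc (length es)" using assms unfolding is_walk_def by auto
  have "conn S (vs ! 0) (vs ! length es)"
    by (rule walk_conn_idx[OF assms]) (use assms in \<open>auto simp: is_walk_def\<close>)
  moreover have "vs \<noteq> []" using l by auto
  ultimately show ?thesis using l by (simp add: hd_conv_nth last_conv_nth)
qed

lemma conn_path:
  assumes "conn S a b"
  shows "\<exists>vs es. is_path V S ends a b vs es"
proof -
  have aV: "a \<in> V" using assms conn_V by auto
  have "(a, b) \<in> (adjr S)\<^sup>*" using assms conn_def by auto
  then show ?thesis
  proof (induction rule: rtrancl_induct)
    case base
    have "is_path V S ends a a [a] []" using aV unfolding is_path_def is_walk_def by auto
    then show ?case by blast
  next
    case (step y z)
    then obtain vs es where p: "is_path V S ends a y vs es" by blast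
    have w: "is_walk V S ends vs es" and h: "hd vs = a" "last vs = y" "distinct vs"
      using p unfolding is_path_def by auto
    have l: "length vs = Suc (length es)" using w unfolding is_walk_def by auto
    show ?case
    proof (cases "z \<in> set vs")
      case True
      then obtain k where k: "k < length vs" "vs ! k = z" by (metis in_set_conv_nth)
      have w2: "is_walk V S ends (take (Suc k) vs) (take k es)"
        using walk_take[OF w, of k] k l by auto
      have lt: "last (take (Suc k) vs) = vs ! k" using k
        by (simp add: take_Suc_conv_app_nth)
      have "is_path V S ends a z (take (Suc k) vs) (take k es)"
        unfolding is_path_def using w2 h k l lt by auto
      then show ?thesis by blast
    next
      case False
      obtain x where x: "x \<in> S" "ends x = {y, z}" "z \<in> V" using step(2) unfolding adjr_def by auto
      have "is_walk V S ends (vs @ [z]) (es @ [x])"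
        using walk_snoc[OF w] x h by auto
      moreover have "vs \<noteq> []" using l by auto
      ultimately have "is_path V S ends a z (vs @ [z]) (es @ [x])"
        unfolding is_path_def using h False by auto
      then show ?thesis by blast
    qed
  qed
qed

lemma graph_connected_iff: "graph_connected V S ends \<longleftrightarrow> (\<forall>a\<in>V. \<forall>b\<in>V. conn S a b)"
proof
  assume "graph_connected V S ends"
  then show "\<forall>a\<in>V. \<forall>b\<in>V. conn S a b" unfolding graph_connected_def
    using walk_conn by metis
next
  assume "\<forall>a\<in>V. \<forall>b\<in>V. conn S a b"
  then show "graph_connected V S ends" unfolding graph_connected_def is_path_def[symmetric]
    using conn_path unfolding is_path_def by metis
qed


lemma conn_insert:
  assumes "conn (insert x S) a b" "ends x = {u, v}"
  shows "conn S a b \<or> (conn S a u \<and> conn S v b) \<or> (conn S a v \<and> conn S u b)"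
proof -
  have aV: "a \<in> V" using assms conn_V by auto
  have "(a, b) \<in> (adjr (insert x S))\<^sup>*" using assms conn_def by auto
  then show ?thesis
  proof (induction rule: rtrancl_induct)
    case base then show ?case using aV conn_refl by auto
  next
    case (step y z)
    obtain x' where x': "x' \<in> insert x S" "ends x' = {y, z}" "y \<in> V" "z \<in> V"
      using step(2) unfolding adjr_def by auto
    show ?case
    proof (cases "x' \<in> S")
      case True
      then have "conn S y z" using x' conn_edge by blast
      then show ?thesis using step(3) conn_trans by blast
    next
      case False
      then have "x' = x" using x' by auto
      then have "{y, z} = {u, v}" using x' assms(2) by auto
      then have yz: "(y = u \<and> z = v) \<or> (y = v \<and> z = u)" by (auto simp: doubleton_eq_iff)
      have uv: "u \<in> V" "v \<in> V" using yz x' by auto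
      show ?thesis using step(3) yz conn_refl[OF uv(1), of S] conn_refl[OF uv(2), of S]
        by (metis conn_sym conn_trans)
    qed
  qed
qed

lemma conn_insert_iff:
  assumes "ends x = {u, v}" "u \<in> V" "v \<in> V"
  shows "conn (insert x S) a b \<longleftrightarrow> conn S a b \<or> (conn S a u \<and> conn S v b) \<or> (conn S a v \<and> conn S u b)"
proof
  assume "conn (insert x S) a b" then show "conn S a b \<or> (conn S a u \<and> conn S v b) \<or> (conn S a v \<and> conn S u b)"
    using conn_insert assms by blast
next
  have e: "conn (insert x S) u v" "conn (insert x S) v u"
    using conn_edge[of x "insert x S"] assms by (auto simp: insert_commute)
  assume "conn S a b \<or> (conn S a u \<and> conn S v b) \<or> (conn S a v \<and> conn S u b)"
  then show "conn (insert x S) a b"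
    using e conn_mono[of S _ _ "insert x S"] conn_trans by blast
qed

lemma bridge_cycle:
  assumes "x \<in> S" "ends x = {u, v}" "conn (S - {x}) u v"
  shows "\<not> acyclic S"
proof -
  obtain vs es where p: "is_path V (S - {x}) ends u v vs es" using conn_path assms(3) by blast
  have w: "is_walk V (S - {x}) ends vs es" and h: "hd vs = u" "last vs = v" "distinct vs"
    using p unfolding is_path_def by auto
  have uV: "u \<in> V" using assms(3) conn_V by auto
  have ne: "vs \<noteq> []" using w unfolding is_walk_def by auto
  have w2: "is_walk V S ends (vs @ [u]) (es @ [x])"
    using walk_snoc[OF walk_mono[OF w order.refl, of S], of x u] assms h uV by (auto simp: insert_commute)
  have "distinct es" using walk_distinct_edges[OF w h(3)] .
  moreover have "x \<notin> set es" using w unfolding is_walk_def by auto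
  ultimately have "is_cycle V S ends (vs @ [u]) (es @ [x])"
    unfolding is_cycle_def using w2 h ne by auto
  then show ?thesis unfolding acyclic_def by blast
qed

lemma cycle_bridge:
  assumes "is_cycle V S ends vs es"
  shows "\<exists>x\<in>S. \<exists>a b. ends x = {a, b} \<and> conn (S - {x}) a b"
proof -
  have w: "is_walk V S ends vs es" and ne: "es \<noteq> []" and c: "last vs = hd vs" "distinct es"
    using assms unfolding is_cycle_def by auto
  have l: "length vs = Suc (length es)" and sS: "set es \<subseteq> S"
    and en: "\<forall>i<length es. ends (es ! i) = {vs ! i, vs ! Suc i}" using w unfolding is_walk_def by auto
  have l1: "0 < length es" using ne by auto
  have "conn (S - {es ! 0}) (vs ! 1) (vs ! length es)"
  proof (rule walk_conn_idx[OF w])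
    fix m assume "1 \<le> m" "m < length es"
    then show "es ! m \<in> S - {es ! 0}" using sS c(2) l1
      by (auto simp: nth_eq_iff_index_eq)
  qed (use l1 in \<open>auto simp: Suc_le_eq\<close>)
  moreover have "vs ! length es = vs ! 0" using c l
    by (metis diff_Suc_1 hd_conv_nth last_conv_nth list.size(3) nat.distinct(1))
  ultimately have "conn (S - {es ! 0}) (vs ! 0) (vs ! 1)" using conn_sym by auto
  moreover have "ends (es ! 0) = {vs ! 0, vs ! 1}" using en l1 by auto
  moreover have "es ! 0 \<in> S" using sS l1 by auto
  ultimately show ?thesis by blast
qed

lemma acyclic_mono: "acyclic S \<Longrightarrow> S' \<subseteq> S \<Longrightarrow> acyclic S'"
  unfolding acyclic_def using cycle_mono by blast

definition comp :: "'e set \<Rightarrow> 'v \<Rightarrow> 'v set" where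
  "comp S w = {z. conn S w z}"

lemma comp_eq: "conn S w z \<Longrightarrow> comp S w = comp S z"
  unfolding comp_def using conn_sym conn_trans by blast

lemma comp_self: "w \<in> V \<Longrightarrow> w \<in> comp S w"
  unfolding comp_def using conn_refl by auto

lemma count:
  assumes "finite S" "S \<subseteq> E"
  shows "card V \<le> card (comp S ` V) + card S \<and> (acyclic S \<longrightarrow> card V = card (comp S ` V) + card S)"
  using assms
proof (induction S rule: finite_induct)
  case empty
  have "comp {} w = {w}" if "w \<in> V" for w
  proof -
    have "conn {} w z \<longleftrightarrow> z = w" for z
      using that unfolding conn_def adjr_def by auto
    then show ?thesis unfolding comp_def by auto
  qed
  then have "comp {} ` V = (\<lambda>w. {w}) ` V" by auto
  moreover have "card ((\<lambda>w. {w}) ` V) = card V" by (rule card_image) (auto simp: inj_on_def)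
  ultimately show ?case by auto
next
  case (insert x S)
  obtain u v where uv: "u \<in> V" "v \<in> V" "ends x = {u, v}" using wf insert by blast
  have IH: "card V \<le> card (comp S ` V) + card S \<and> (acyclic S \<longrightarrow> card V = card (comp S ` V) + card S)"
    using insert by auto
  have iff: "\<And>a b. conn (insert x S) a b \<longleftrightarrow> conn S a b \<or> (conn S a u \<and> conn S v b) \<or> (conn S a v \<and> conn S u b)"
    using conn_insert_iff uv by blast
  have cardS: "card (insert x S) = Suc (card S)" using insert by auto
  have fin: "finite (comp S ` V)" "finite (comp (insert x S) ` V)" using finV by auto
  show ?case
  proof (cases "conn S u v")
    case True
    have "conn (insert x S) w z \<longleftrightarrow> conn S w z" for w z
      using iff[of w z] True by (meson conn_sym conn_trans)
    then have "comp (insert x S) w = comp S w" for w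
      unfolding comp_def by auto
    then have "comp (insert x S) ` V = comp S ` V" by auto
    moreover have "\<not> acyclic (insert x S)"
      using bridge_cycle[of x "insert x S" u v] uv True insert(2) by auto
    ultimately show ?thesis using IH cardS by auto
  next
    case False
    define Cu where "Cu = comp S u"
    define Cv where "Cv = comp S v"
    have cw: "comp (insert x S) w = (if w \<in> Cu \<union> Cv then Cu \<union> Cv else comp S w)" if "w \<in> V" for w
    proof (cases "w \<in> Cu")
      case True
      then have "conn S w u" using conn_sym by (auto simp: Cu_def comp_def)
      moreover have "\<not> conn S w v" using False calculation conn_trans conn_sym by blast
      ultimately have "conn (insert x S) w z \<longleftrightarrow> conn S u z \<or> conn S v z" for z
        using iff[of w z] by (meson conn_sym conn_trans)
      then show ?thesis using True unfolding Cu_def Cv_def comp_def by auto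
    next
      case F1: False
      show ?thesis
      proof (cases "w \<in> Cv")
        case True
        then have "conn S w v" using conn_sym by (auto simp: Cv_def comp_def)
        moreover have "\<not> conn S w u" using False calculation conn_trans conn_sym by blast
        ultimately have "conn (insert x S) w z \<longleftrightarrow> conn S u z \<or> conn S v z" for z
          using iff[of w z] by (meson conn_sym conn_trans)
        then show ?thesis using True unfolding Cu_def Cv_def comp_def by auto
      next
        case F2: False
        have "\<not> conn S w u" "\<not> conn S w v" using F1 F2 conn_sym
          by (auto simp: Cu_def Cv_def comp_def)
        then show ?thesis using F1 F2 unfolding comp_def using iff by auto
      qed
    qed
    have uCu: "u \<in> Cu" "v \<in> Cv" "v \<notin> Cu" using uv False comp_self
      by (auto simp: Cu_def Cv_def comp_def)
    have neq: "Cu \<noteq> Cv" using uCu by auto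
    have img: "comp (insert x S) ` V = insert (Cu \<union> Cv) (comp S ` V - {Cu, Cv})"
    proof
      show "comp (insert x S) ` V \<subseteq> insert (Cu \<union> Cv) (comp S ` V - {Cu, Cv})"
      proof
        fix C assume "C \<in> comp (insert x S) ` V"
        then obtain w where w: "w \<in> V" "C = comp (insert x S) w" by auto
        show "C \<in> insert (Cu \<union> Cv) (comp S ` V - {Cu, Cv})"
        proof (cases "w \<in> Cu \<union> Cv")
          case True then show ?thesis using w cw by auto
        next
          case False
          then have "comp S w \<noteq> Cu" "comp S w \<noteq> Cv" using comp_self w by auto
          then show ?thesis using False w cw by auto
        qed
      qed
    next
      show "insert (Cu \<union> Cv) (comp S ` V - {Cu, Cv}) \<subseteq> comp (insert x S) ` V"
      proof
        fix C assume C: "C \<in> insert (Cu \<union> Cv) (comp S ` V - {Cu, Cv})"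
        show "C \<in> comp (insert x S) ` V"
        proof (cases "C = Cu \<union> Cv")
          case True then show ?thesis using cw[OF uv(1)] uCu uv by (auto intro!: image_eqI[of _ _ u])
        next
          case False
          then obtain w where w: "w \<in> V" "C = comp S w" "C \<noteq> Cu" "C \<noteq> Cv" using C by auto
          have "w \<notin> Cu" using w comp_eq unfolding Cu_def comp_def using conn_sym by blast
          moreover have "w \<notin> Cv" using w comp_eq unfolding Cv_def comp_def using conn_sym by blast
          ultimately show ?thesis using cw[OF w(1)] w by auto
        qed
      qed
    qed
    have notin: "Cu \<union> Cv \<notin> comp S ` V - {Cu, Cv}"
    proof
      assume "Cu \<union> Cv \<in> comp S ` V - {Cu, Cv}"
      then obtain w where w: "w \<in> V" "Cu \<union> Cv = comp S w" by auto
      then have "conn S w u" using uCu unfolding comp_def by auto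
      then have "comp S w = Cu" using comp_eq Cu_def by auto
      then show False using w uCu by auto
    qed
    have inn: "Cu \<in> comp S ` V" "Cv \<in> comp S ` V" using uv Cu_def Cv_def by auto
    have "card (comp S ` V - {Cu, Cv}) = card (comp S ` V) - 2"
      using inn neq fin by (simp add: card_Diff_subset)
    moreover have "card (comp S ` V) \<ge> 2"
    proof -
      have "{Cu, Cv} \<subseteq> comp S ` V" using inn by auto
      then have "card {Cu, Cv} \<le> card (comp S ` V)" using fin card_mono by blast
      then show ?thesis using neq by auto
    qed
    ultimately have "card (comp (insert x S) ` V) + 1 = card (comp S ` V)"
      using img notin fin by (simp add: card_insert_if)
    moreover have "acyclic (insert x S) \<longrightarrow> acyclic S" using acyclic_mono by blast
    ultimately show ?thesis using IH cardS by auto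
  qed
qed


lemma ends_V: "x \<in> E \<Longrightarrow> ends x = {a, b} \<Longrightarrow> a \<in> V \<and> b \<in> V"
proof -
  assume "x \<in> E" "ends x = {a, b}"
  then obtain u v where "u \<in> V" "v \<in> V" "ends x = {u, v}" using wf by blast
  then show ?thesis using \<open>ends x = {a, b}\<close> by auto
qed

lemma conn_all_card:
  assumes "S \<subseteq> E" "\<forall>a\<in>V. \<forall>b\<in>V. conn S a b" "V \<noteq> {}"
  shows "card V \<le> card S + 1"
proof -
  have fS: "finite S" using assms(1) finE finite_subset by auto
  obtain a0 where a0: "a0 \<in> V" using assms(3) by auto
  have "\<forall>w\<in>V. comp S w = comp S a0" using assms(2) a0 comp_eq by blast
  then have "comp S ` V \<subseteq> {comp S a0}" by auto
  then have "card (comp S ` V) \<le> card {comp S a0}" by (intro card_mono) auto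
  then have "card (comp S ` V) \<le> 1" by simp
  then show ?thesis using count[OF fS assms(1)] by auto
qed

lemma acyclic_card:
  assumes "S \<subseteq> E" "acyclic S" "V \<noteq> {}"
  shows "card S + 1 \<le> card V"
proof -
  have fS: "finite S" using assms(1) finE finite_subset by auto
  have "comp S ` V \<noteq> {}" using assms(3) by auto
  then have "card (comp S ` V) \<ge> 1" using finV by (simp add: Suc_leI card_gt_0_iff)
  then show ?thesis using count[OF fS assms(1)] assms(2) by auto
qed

lemma spanning_tree_iff:
  "spanning_tree V E ends T \<longleftrightarrow> T \<subseteq> E \<and> (\<forall>a\<in>V. \<forall>b\<in>V. conn T a b) \<and> acyclic T"
  unfolding spanning_tree_def graph_connected_iff acyclic_def by auto

lemma remove_bridge_conn:
  assumes "x \<in> T" "ends x = {a, b}" "conn (T - {x}) a b" "conn T w z"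
  shows "conn (T - {x}) w z"
proof -
  have "conn (insert x (T - {x})) w z" using assms by (simp add: insert_absorb)
  from conn_insert[OF this assms(2)] show ?thesis
  proof (elim disjE conjE)
    assume "conn (T - {x}) w a" "conn (T - {x}) b z"
    then show ?thesis using conn_trans[OF conn_trans[OF _ assms(3)]] by blast
  next
    assume "conn (T - {x}) w b" "conn (T - {x}) a z"
    then show ?thesis using conn_trans[OF conn_trans[OF _ conn_sym[OF assms(3)]]] by blast
  qed
qed

lemma tree_by_card:
  assumes "T \<subseteq> E" "\<forall>a\<in>V. \<forall>b\<in>V. conn T a b" "card T + 1 = card V"
  shows "spanning_tree V E ends T"
proof -
  have fT: "finite T" using assms(1) finE finite_subset by auto
  have "acyclic T"
  proof (rule ccontr)
    assume "\<not> acyclic T"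
    then obtain vs es where "is_cycle V T ends vs es" unfolding acyclic_def by auto
    then obtain x a b where x: "x \<in> T" "ends x = {a, b}" "conn (T - {x}) a b"
      using cycle_bridge by blast
    have "\<forall>w\<in>V. \<forall>z\<in>V. conn (T - {x}) w z"
    proof (intro ballI)
      fix w z assume "w \<in> V" "z \<in> V"
      then show "conn (T - {x}) w z" using remove_bridge_conn[OF x] assms(2) by simp
    qed
    moreover have "V \<noteq> {}" using assms(3) by auto
    ultimately have "card V \<le> card (T - {x}) + 1" using conn_all_card[of "T - {x}"] assms(1) by auto
    moreover have "0 < card T" using x(1) fT card_gt_0_iff by blast
    ultimately show False using assms(3) x(1) by (simp add: card_Diff_singleton)
  qed
  then show ?thesis using spanning_tree_iff assms by auto
qed

lemma tree_card:
  assumes "spanning_tree V E ends T" "V \<noteq> {}"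
  shows "card T + 1 = card V"
proof -
  have "T \<subseteq> E" "\<forall>a\<in>V. \<forall>b\<in>V. conn T a b" "acyclic T" using assms(1) spanning_tree_iff by auto
  then have "card V \<le> card T + 1" "card T + 1 \<le> card V"
    using conn_all_card acyclic_card assms(2) by auto
  then show ?thesis by linarith
qed

lemma tree_path_set:
  assumes T: "spanning_tree V E ends T" and p: "is_path V T ends u v vs es"
  shows "set es = {x \<in> T. \<not> conn (T - {x}) u v}"
proof -
  have w: "is_walk V T ends vs es" and h: "hd vs = u" "last vs = v" "distinct vs"
    using p unfolding is_path_def by auto
  have l: "length vs = Suc (length es)" and sT: "set es \<subseteq> T"
    and en: "\<forall>i<length es. ends (es ! i) = {vs ! i, vs ! Suc i}" using w unfolding is_walk_def by auto
  have de: "distinct es" using walk_distinct_edges[OF w h(3)] .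
  have ac: "acyclic T" using T spanning_tree_iff by auto
  have "vs \<noteq> []" using l by auto
  then have hv: "hd vs = vs ! 0" "last vs = vs ! length es" using l
    by (auto simp: hd_conv_nth last_conv_nth)
  show ?thesis
  proof (intro set_eqI iffI)
    fix x assume "x \<in> set es"
    then obtain i where i: "i < length es" "es ! i = x" by (metis in_set_conv_nth)
    have c1: "conn (T - {x}) (vs ! 0) (vs ! i)"
      by (rule walk_conn_idx[OF w]) (use i sT de in \<open>auto simp: nth_eq_iff_index_eq\<close>)
    have c2: "conn (T - {x}) (vs ! Suc i) (vs ! length es)"
      by (rule walk_conn_idx[OF w]) (use i sT de in \<open>auto simp: nth_eq_iff_index_eq\<close>)
    have "\<not> conn (T - {x}) u v"
    proof
      assume "conn (T - {x}) u v"
      then have "conn (T - {x}) (vs ! 0) (vs ! length es)" using h hv by simp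
      then have "conn (T - {x}) (vs ! i) (vs ! length es)" using conn_trans[OF conn_sym[OF c1]] by blast
      then have "conn (T - {x}) (vs ! i) (vs ! Suc i)" using conn_trans[OF _ conn_sym[OF c2]] by blast
      moreover have "ends x = {vs ! i, vs ! Suc i}" using en i by auto
      moreover have "x \<in> T" using i sT nth_mem by blast
      ultimately show False using bridge_cycle[of x T] ac by blast
    qed
    then show "x \<in> {x \<in> T. \<not> conn (T - {x}) u v}" using \<open>x \<in> set es\<close> sT by auto
  next
    fix x assume x: "x \<in> {x \<in> T. \<not> conn (T - {x}) u v}"
    show "x \<in> set es"
    proof (rule ccontr)
      assume "x \<notin> set es"
      then have "is_walk V (T - {x}) ends vs es" using w unfolding is_walk_def by auto
      then have "conn (T - {x}) u v" using walk_conn h by metis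
      then show False using x by auto
    qed
  qed
qed

lemma tree_path_edges_eq:
  assumes T: "spanning_tree V E ends T" and uv: "u \<in> V" "v \<in> V"
  shows "tree_path_edges V T ends u v = {x \<in> T. \<not> conn (T - {x}) u v}"
proof -
  have "conn T u v" using T uv spanning_tree_iff by auto
  then obtain vs es where p: "is_path V T ends u v vs es" using conn_path by blast
  show ?thesis unfolding tree_path_edges_def
  proof (rule the_equality)
    show "\<exists>vs es. is_path V T ends u v vs es \<and> {x \<in> T. \<not> conn (T - {x}) u v} = set es"
      using p tree_path_set[OF T p] by auto
  next
    fix P assume "\<exists>vs es. is_path V T ends u v vs es \<and> P = set es"
    then show "P = {x \<in> T. \<not> conn (T - {x}) u v}" using tree_path_set[OF T] by auto
  qed
qed

lemma exchange:
  assumes T: "spanning_tree V E ends T" and x: "x \<in> T" "ends x = {a, b}"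
    and f: "f \<in> E" "f \<notin> T" "ends f = {u, v}"
  shows "\<not> conn (T - {x}) u v \<longleftrightarrow> (\<forall>w\<in>V. \<forall>z\<in>V. conn (insert f (T - {x})) w z)"
proof -
  have TE: "T \<subseteq> E" and ca: "\<forall>w\<in>V. \<forall>z\<in>V. conn T w z" and ac: "acyclic T"
    using T spanning_tree_iff by auto
  have abV: "a \<in> V" "b \<in> V" using ends_V x TE by auto
  have uvV: "u \<in> V" "v \<in> V" using ends_V f by auto
  have nab: "\<not> conn (T - {x}) a b" using bridge_cycle[OF x] ac by auto
  show ?thesis
  proof
    assume nuv: "\<not> conn (T - {x}) u v"
    have side: "conn (T - {x}) w a \<or> conn (T - {x}) w b" if "w \<in> V" for w
    proof -
      have "conn (insert x (T - {x})) w a" using ca that abV x(1) by (simp add: insert_absorb)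
      from conn_insert[OF this x(2)] show ?thesis by blast
    qed
    let ?T' = "insert f (T - {x})"
    have mono: "conn (T - {x}) p q \<Longrightarrow> conn ?T' p q" for p q using conn_mono by blast
    have fuv: "conn ?T' u v" using conn_edge[of f ?T' u v] f uvV by auto
    have "conn ?T' a b"
    proof (cases "conn (T - {x}) u a")
      case True
      have "\<not> conn (T - {x}) v a"
      proof
        assume "conn (T - {x}) v a"
        then have "conn (T - {x}) u v" using conn_trans[OF True conn_sym] by blast
        then show False using nuv by blast
      qed
      then have vb: "conn (T - {x}) v b" using side[OF uvV(2)] by blast
      have "conn ?T' a u" using mono[OF conn_sym[OF True]] .
      then have "conn ?T' a v" using conn_trans[OF _ fuv] by simp
      then show ?thesis using conn_trans[OF _ mono[OF vb]] by simp
    next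
      case False
      then have ub: "conn (T - {x}) u b" using side[OF uvV(1)] by blast
      have "\<not> conn (T - {x}) v b"
      proof
        assume "conn (T - {x}) v b"
        then have "conn (T - {x}) u v" using conn_trans[OF ub conn_sym] by blast
        then show False using nuv by blast
      qed
      then have va: "conn (T - {x}) v a" using side[OF uvV(2)] by blast
      have "conn ?T' a v" using mono[OF conn_sym[OF va]] .
      then have "conn ?T' a u" using conn_trans[OF _ conn_sym[OF fuv]] by simp
      then show ?thesis using conn_trans[OF _ mono[OF ub]] by simp
    qed
    have side': "conn ?T' w a" if "w \<in> V" for w
    proof -
      from side[OF that] show ?thesis
      proof
        assume "conn (T - {x}) w b"
        then show ?thesis using conn_trans[OF mono conn_sym[OF \<open>conn ?T' a b\<close>]] by simp
      qed (rule mono)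
    qed
    show "\<forall>w\<in>V. \<forall>z\<in>V. conn ?T' w z"
    proof (intro ballI)
      fix w z assume "w \<in> V" "z \<in> V"
      then show "conn ?T' w z" using conn_trans[OF side' conn_sym[OF side']] by simp
    qed
  next
    assume all: "\<forall>w\<in>V. \<forall>z\<in>V. conn (insert f (T - {x})) w z"
    show "\<not> conn (T - {x}) u v"
    proof
      assume cuv: "conn (T - {x}) u v"
      have "conn (insert f (T - {x})) a b" using all abV by auto
      from conn_insert[OF this f(3)] have "conn (T - {x}) a b"
      proof (elim disjE conjE)
        assume "conn (T - {x}) a u" "conn (T - {x}) v b"
        then show ?thesis using conn_trans[OF conn_trans[OF _ cuv]] by blast
      next
        assume "conn (T - {x}) a v" "conn (T - {x}) u b"
        then show ?thesis using conn_trans[OF conn_trans[OF _ conn_sym[OF cuv]]] by blast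
      qed
      then show False using nab by auto
    qed
  qed
qed

lemma cycle_minus_edge_conn:
  assumes c: "is_cycle V S ends vs es" and sv: "set vs = V" and y: "y \<in> set es"
  shows "\<forall>a\<in>V. \<forall>b\<in>V. conn (set es - {y}) a b"
proof -
  have w: "is_walk V S ends vs es" and ne: "es \<noteq> []" and cc: "last vs = hd vs" "distinct es"
    using c unfolding is_cycle_def by auto
  have l: "length vs = Suc (length es)" using w unfolding is_walk_def by auto
  obtain k where k: "k < length es" "es ! k = y" using y by (metis in_set_conv_nth)
  have vn: "vs ! length es = vs ! 0" using cc l
    by (metis diff_Suc_1 hd_conv_nth last_conv_nth list.size(3) nat.distinct(1))
  have all0: "conn (set es - {y}) (vs ! 0) (vs ! i)" if "i \<le> length es" for i
  proof (cases "i \<le> k")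
    case True
    show ?thesis
      by (rule walk_conn_idx[OF w]) (use True k cc that in \<open>auto simp: nth_eq_iff_index_eq\<close>)
  next
    case False
    have "conn (set es - {y}) (vs ! i) (vs ! length es)"
      by (rule walk_conn_idx[OF w]) (use False k cc that in \<open>auto simp: nth_eq_iff_index_eq\<close>)
    then show ?thesis using vn conn_sym by auto
  qed
  have "\<forall>a\<in>V. conn (set es - {y}) (vs ! 0) a"
  proof
    fix a assume "a \<in> V"
    then obtain i where "i < length vs" "vs ! i = a" using sv by (metis in_set_conv_nth)
    then show "conn (set es - {y}) (vs ! 0) a" using all0 l by auto
  qed
  then show ?thesis using conn_trans[OF conn_sym] by blast
qed

end



lemma parity_switch:
  assumes "finite Ob" "f ` Ob = Ob" "inj_on f Ob"
  shows "even (card {y \<in> Ob. (y \<in> A) \<noteq> (f y \<in> A)})"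
proof -
  define P where "P = {y \<in> Ob. y \<in> A \<and> f y \<notin> A}"
  define Q where "Q = {y \<in> Ob. y \<notin> A \<and> f y \<in> A}"
  define R where "R = {y \<in> Ob. y \<in> A \<and> f y \<in> A}"
  define B where "B = {y \<in> Ob. f y \<in> A}"
  have fin: "finite P" "finite Q" "finite R" unfolding P_def Q_def R_def
    by (rule finite_subset[OF _ assms(1)], blast)+
  have img: "f ` B = {z \<in> Ob. z \<in> A}"
  proof
    show "f ` B \<subseteq> {z \<in> Ob. z \<in> A}" using assms(2) unfolding B_def by blast
    show "{z \<in> Ob. z \<in> A} \<subseteq> f ` B"
    proof
      fix z assume z: "z \<in> {z \<in> Ob. z \<in> A}"
      then have "z \<in> f ` Ob" using assms(2) by simp
      then obtain y where "y \<in> Ob" "z = f y" by blast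
      then show "z \<in> f ` B" using z unfolding B_def by blast
    qed
  qed
  have "card (f ` B) = card B" by (rule card_image, rule inj_on_subset[OF assms(3)]) (auto simp: B_def)
  then have c: "card B = card {z \<in> Ob. z \<in> A}" using img by simp
  have e1: "{z \<in> Ob. z \<in> A} = R \<union> P" unfolding R_def P_def by blast
  have e2: "B = R \<union> Q" unfolding R_def Q_def B_def by blast
  have c1: "card (R \<union> P) = card R + card P" by (rule card_Un_disjoint) (use fin in \<open>auto simp: R_def P_def\<close>)
  have c2: "card (R \<union> Q) = card R + card Q" by (rule card_Un_disjoint) (use fin in \<open>auto simp: R_def Q_def\<close>)
  have "card P = card Q" using c e1 e2 c1 c2 by simp
  moreover have "{y \<in> Ob. (y \<in> A) \<noteq> (f y \<in> A)} = P \<union> Q" unfolding P_def Q_def by blast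
  moreover have "card (P \<union> Q) = card P + card Q" by (rule card_Un_disjoint) (use fin in \<open>auto simp: P_def Q_def\<close>)
  ultimately show ?thesis by simp
qed

lemma cm_alpha_alpha: "comb_map D \<alpha> \<sigma> \<Longrightarrow> \<alpha> (\<alpha> d) = d"
proof (cases "d \<in> D")
  case True
  assume "comb_map D \<alpha> \<sigma>" then show ?thesis using True unfolding comb_map_def by blast
next
  case False
  assume "comb_map D \<alpha> \<sigma>"
  then have "\<alpha> permutes D" unfolding comb_map_def by blast
  then have "\<alpha> d = d" using False permutes_not_in by fast
  then show ?thesis by simp
qed

lemma cm_alpha_D: "comb_map D \<alpha> \<sigma> \<Longrightarrow> d \<in> D \<Longrightarrow> \<alpha> d \<in> D"
  unfolding comb_map_def by (simp add: permutes_in_image)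

lemma cm_sigma_D: "comb_map D \<alpha> \<sigma> \<Longrightarrow> d \<in> D \<Longrightarrow> \<sigma> d \<in> D"
  unfolding comb_map_def by (simp add: permutes_in_image)

lemma cm_comp_alpha: "comb_map D \<alpha> \<sigma> \<Longrightarrow> (\<sigma> \<circ> \<alpha>) \<circ> \<alpha> = \<sigma>"
proof -
  assume "comb_map D \<alpha> \<sigma>"
  then have "\<And>d. \<alpha> (\<alpha> d) = d" by (rule cm_alpha_alpha)
  then show ?thesis by (simp add: fun_eq_iff)
qed

lemma cm_dual: "comb_map D \<alpha> \<sigma> \<Longrightarrow> comb_map D \<alpha> (\<sigma> \<circ> \<alpha>)"
proof -
  assume a: "comb_map D \<alpha> \<sigma>"
  then have "\<alpha> permutes D" "\<sigma> permutes D" unfolding comb_map_def by auto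
  then have "\<sigma> \<circ> \<alpha> permutes D" by (rule permutes_compose)
  then show ?thesis using a unfolding comb_map_def by simp
qed

lemma cm_perm_sigma: "comb_map D \<alpha> \<sigma> \<Longrightarrow> permutation \<sigma>"
  unfolding comb_map_def permutation_permutes by auto

lemma orbit_sub_D: "comb_map D \<alpha> \<sigma> \<Longrightarrow> d \<in> D \<Longrightarrow> orbit \<sigma> d \<subseteq> D"
  unfolding comb_map_def using permutes_orbit_subset by metis

lemma orbit_closed: "d \<in> A \<Longrightarrow> (\<And>y. y \<in> A \<Longrightarrow> f y \<in> A) \<Longrightarrow> orbit f d \<subseteq> A"
proof
  fix y assume a: "d \<in> A" "\<And>y. y \<in> A \<Longrightarrow> f y \<in> A" and y: "y \<in> orbit f d"
  from y show "y \<in> A" by (induction rule: orbit.induct) (use a in auto)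
qed

lemma orbit_eq_of_mem: "permutation f \<Longrightarrow> y \<in> orbit f x \<Longrightarrow> orbit f y = orbit f x"
  using cyclic_on_orbit' orbit_cyclic_eq3 by fast

lemma primal_mgraph:
  assumes "comb_map D \<alpha> \<sigma>"
  shows "mgraph (map_vertices D \<sigma>) (map_edges D \<alpha>) (primal_ends \<sigma>)"
proof
  show "finite (map_vertices D \<sigma>)" "finite (map_edges D \<alpha>)"
    using assms unfolding comb_map_def map_vertices_def map_edges_def by auto
next
  fix x assume "x \<in> map_edges D \<alpha>"
  then obtain d where d: "d \<in> D" "x = {d, \<alpha> d}" unfolding map_edges_def by auto
  then show "\<exists>u\<in>map_vertices D \<sigma>. \<exists>v\<in>map_vertices D \<sigma>. primal_ends \<sigma> x = {u, v}"
    using cm_alpha_D[OF assms] unfolding primal_ends_def map_vertices_def by auto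
qed

lemma dual_vertices: "map_vertices D (\<sigma> \<circ> \<alpha>) = map_faces D \<alpha> \<sigma>"
  unfolding map_vertices_def map_faces_def map_vertex_def map_face_def by simp

lemma dual_pends: "primal_ends (\<sigma> \<circ> \<alpha>) = dual_ends \<alpha> \<sigma>"
  unfolding primal_ends_def dual_ends_def map_vertex_def map_face_def by (simp add: fun_eq_iff)

lemma dual_faces: "comb_map D \<alpha> \<sigma> \<Longrightarrow> map_faces D \<alpha> (\<sigma> \<circ> \<alpha>) = map_vertices D \<sigma>"
proof -
  assume "comb_map D \<alpha> \<sigma>"
  then have h: "\<sigma> \<circ> \<alpha> \<circ> \<alpha> = \<sigma>" by (rule cm_comp_alpha)
  show ?thesis unfolding map_vertices_def map_faces_def map_vertex_def map_face_def h ..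
qed

lemma dual_dends: "comb_map D \<alpha> \<sigma> \<Longrightarrow> dual_ends \<alpha> (\<sigma> \<circ> \<alpha>) = primal_ends \<sigma>"
proof -
  assume "comb_map D \<alpha> \<sigma>"
  then have h: "\<sigma> \<circ> \<alpha> \<circ> \<alpha> = \<sigma>" by (rule cm_comp_alpha)
  show ?thesis unfolding primal_ends_def dual_ends_def map_vertex_def map_face_def h ..
qed

lemma dual_mgraph:
  assumes "comb_map D \<alpha> \<sigma>"
  shows "mgraph (map_faces D \<alpha> \<sigma>) (map_edges D \<alpha>) (dual_ends \<alpha> \<sigma>)"
proof -
  have "mgraph (map_vertices D (\<sigma> \<circ> \<alpha>)) (map_edges D \<alpha>) (primal_ends (\<sigma> \<circ> \<alpha>))"
    by (rule primal_mgraph[OF cm_dual[OF assms]])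
  then show ?thesis by (simp only: dual_vertices dual_pends)
qed

definition map_trans :: "'d set \<Rightarrow> ('d \<Rightarrow> 'd) \<Rightarrow> ('d \<Rightarrow> 'd) \<Rightarrow> bool" where
  "map_trans D \<alpha> \<sigma> \<longleftrightarrow> (\<forall>A. A \<subseteq> D \<and> (\<forall>d\<in>A. \<sigma> d \<in> A) \<and> (\<forall>d\<in>A. \<alpha> d \<in> A) \<longrightarrow> A = {} \<or> A = D)"

lemma trans_dual:
  assumes "comb_map D \<alpha> \<sigma>" "map_trans D \<alpha> \<sigma>"
  shows "map_trans D \<alpha> (\<sigma> \<circ> \<alpha>)"
  unfolding map_trans_def
proof (intro allI impI)
  fix A assume A: "A \<subseteq> D \<and> (\<forall>d\<in>A. (\<sigma> \<circ> \<alpha>) d \<in> A) \<and> (\<forall>d\<in>A. \<alpha> d \<in> A)"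
  have "\<forall>d\<in>A. \<sigma> d \<in> A"
  proof
    fix d assume "d \<in> A"
    then have "\<alpha> d \<in> A" using A by auto
    then have "(\<sigma> \<circ> \<alpha>) (\<alpha> d) \<in> A" using A by blast
    then show "\<sigma> d \<in> A" using cm_alpha_alpha[OF assms(1)] by simp
  qed
  then show "A = {} \<or> A = D" using assms(2) A unfolding map_trans_def by blast
qed

lemma connected_trans:
  assumes cm: "comb_map D \<alpha> \<sigma>"
    and gc: "graph_connected (map_vertices D \<sigma>) (map_edges D \<alpha>) (primal_ends \<sigma>)"
  shows "map_trans D \<alpha> \<sigma>"
  unfolding map_trans_def
proof (intro allI impI)
  interpret G: mgraph "map_vertices D \<sigma>" "map_edges D \<alpha>" "primal_ends \<sigma>"
    by (rule primal_mgraph[OF cm])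
  fix A assume A: "A \<subseteq> D \<and> (\<forall>d\<in>A. \<sigma> d \<in> A) \<and> (\<forall>d\<in>A. \<alpha> d \<in> A)"
  have ps: "permutation \<sigma>" using cm_perm_sigma[OF cm] .
  have sub: "orbit \<sigma> d \<subseteq> A" if "d \<in> A" for d using orbit_closed[of d A \<sigma>] that A by blast
  show "A = {} \<or> A = D"
  proof (cases "A = {}")
    case False
    then obtain d0 where d0: "d0 \<in> A" by auto
    have step: "w' \<subseteq> A" if a1: "(w, w') \<in> G.adjr (map_edges D \<alpha>)" and a2: "w \<subseteq> A" for w w'
    proof -
      obtain x where x: "x \<in> map_edges D \<alpha>" "primal_ends \<sigma> x = {w, w'}"
        using a1 unfolding G.adjr_def by blast
      then obtain d where d: "d \<in> D" "x = {d, \<alpha> d}" unfolding map_edges_def by auto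
      then have pe: "{orbit \<sigma> d, orbit \<sigma> (\<alpha> d)} = {w, w'}"
        using x unfolding primal_ends_def map_vertex_def by auto
      have "d \<in> A \<and> \<alpha> d \<in> A"
      proof (cases "w = orbit \<sigma> d")
        case True
        then have "d \<in> A" using a2 permutation_self_in_orbit[OF ps] by blast
        then show ?thesis using A by blast
      next
        case False
        then have "w = orbit \<sigma> (\<alpha> d)" using pe by blast
        then have "\<alpha> d \<in> A" using a2 permutation_self_in_orbit[OF ps] by blast
        then have "\<alpha> (\<alpha> d) \<in> A" using A by blast
        then show ?thesis using \<open>\<alpha> d \<in> A\<close> cm_alpha_alpha[OF cm] by simp
      qed
      then have "orbit \<sigma> d \<subseteq> A" "orbit \<sigma> (\<alpha> d) \<subseteq> A" using sub by auto
      moreover have "w' = orbit \<sigma> d \<or> w' = orbit \<sigma> (\<alpha> d)" using pe by blast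
      ultimately show ?thesis by blast
    qed
    have "d \<in> A" if "d \<in> D" for d
    proof -
      have "orbit \<sigma> d0 \<in> map_vertices D \<sigma>" "orbit \<sigma> d \<in> map_vertices D \<sigma>"
        using d0 A that unfolding map_vertices_def map_vertex_def by auto
      then have "G.conn (map_edges D \<alpha>) (orbit \<sigma> d0) (orbit \<sigma> d)"
        using gc G.graph_connected_iff by blast
      then have r: "(orbit \<sigma> d0, orbit \<sigma> d) \<in> (G.adjr (map_edges D \<alpha>))\<^sup>*" unfolding G.conn_def by auto
      have "orbit \<sigma> d \<subseteq> A"
        using r
      proof (induction rule: rtrancl_induct)
        case base then show ?case using sub d0 by blast
      next
        case (step y z) then show ?case using \<open>\<And>w w'. (w, w') \<in> G.adjr (map_edges D \<alpha>) \<Longrightarrow> w \<subseteq> A \<Longrightarrow> w' \<subseteq> A\<close> by blast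
      qed
      then show ?thesis using permutation_self_in_orbit[OF ps] by blast
    qed
    then show ?thesis using A by blast
  qed simp
qed


lemma edge_rep:
  assumes "comb_map D \<alpha> \<sigma>" "z \<in> {d, \<alpha> d}"
  shows "{d, \<alpha> d} = {z, \<alpha> z}"
  using assms(2) cm_alpha_alpha[OF assms(1)] by auto

lemma key:
  assumes cm: "comb_map D \<alpha> \<sigma>" and tr: "map_trans D \<alpha> \<sigma>" and SE: "S \<subseteq> map_edges D \<alpha>"
    and ac: "mgraph.acyclic (map_vertices D \<sigma>) (primal_ends \<sigma>) S"
  shows "\<forall>p\<in>map_faces D \<alpha> \<sigma>. \<forall>q\<in>map_faces D \<alpha> \<sigma>.
           mgraph.conn (map_faces D \<alpha> \<sigma>) (dual_ends \<alpha> \<sigma>) (map_edges D \<alpha> - S) p q"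
proof (rule ccontr)
  interpret G: mgraph "map_vertices D \<sigma>" "map_edges D \<alpha>" "primal_ends \<sigma>"
    by (rule primal_mgraph[OF cm])
  interpret H: mgraph "map_faces D \<alpha> \<sigma>" "map_edges D \<alpha>" "dual_ends \<alpha> \<sigma>"
    by (rule dual_mgraph[OF cm])
  let ?E = "map_edges D \<alpha>"
  let ?F = "map_faces D \<alpha> \<sigma>"
  have finD: "finite D" using cm unfolding comb_map_def by auto
  have aa: "\<And>d. \<alpha> (\<alpha> d) = d" using cm_alpha_alpha[OF cm] .
  have aD: "\<And>d. d \<in> D \<Longrightarrow> \<alpha> d \<in> D" using cm_alpha_D[OF cm] .
  have sD: "\<And>d. d \<in> D \<Longrightarrow> \<sigma> d \<in> D" using cm_sigma_D[OF cm] .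
  have anf: "\<And>d. d \<in> D \<Longrightarrow> \<alpha> d \<noteq> d" using cm unfolding comb_map_def by auto
  assume "\<not> (\<forall>p\<in>?F. \<forall>q\<in>?F. H.conn (?E - S) p q)"
  then obtain p q where pq: "p \<in> ?F" "q \<in> ?F" "\<not> H.conn (?E - S) p q" by blast
  obtain d0 where d0: "d0 \<in> D" "p = map_face \<alpha> \<sigma> d0" using pq(1) unfolding map_faces_def by auto
  obtain d1 where d1: "d1 \<in> D" "q = map_face \<alpha> \<sigma> d1" using pq(2) unfolding map_faces_def by auto
  define A where "A = {d \<in> D. H.conn (?E - S) p (map_face \<alpha> \<sigma> d)}"
  have pphi: "permutation (\<sigma> \<circ> \<alpha>)" using cm_perm_sigma[OF cm_dual[OF cm]] .
  have ps: "permutation \<sigma>" using cm_perm_sigma[OF cm] .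
  have facephi: "map_face \<alpha> \<sigma> (\<sigma> (\<alpha> d)) = map_face \<alpha> \<sigma> d" for d
    using permutation_orbit_step[OF pphi, of d] unfolding map_face_def by simp
  have phiA: "d \<in> A \<longleftrightarrow> \<sigma> (\<alpha> d) \<in> A" if "d \<in> D" for d
    using facephi[of d] sD aD that unfolding A_def by auto
  have EA: "d \<in> A \<longleftrightarrow> \<alpha> d \<in> A" if "d \<in> D" "{d, \<alpha> d} \<notin> S" for d
  proof -
    have x: "{d, \<alpha> d} \<in> ?E - S" using that unfolding map_edges_def by auto
    have de: "dual_ends \<alpha> \<sigma> {d, \<alpha> d} = {map_face \<alpha> \<sigma> d, map_face \<alpha> \<sigma> (\<alpha> d)}"
      unfolding dual_ends_def by auto
    have inF: "map_face \<alpha> \<sigma> d \<in> ?F" "map_face \<alpha> \<sigma> (\<alpha> d) \<in> ?F"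
      using that aD unfolding map_faces_def by auto
    have c: "H.conn (?E - S) (map_face \<alpha> \<sigma> d) (map_face \<alpha> \<sigma> (\<alpha> d))"
      using H.conn_edge[OF x de inF] .
    show ?thesis
    proof
      assume "d \<in> A"
      then have "H.conn (?E - S) p (map_face \<alpha> \<sigma> d)" unfolding A_def by auto
      then have "H.conn (?E - S) p (map_face \<alpha> \<sigma> (\<alpha> d))" using H.conn_trans c by blast
      then show "\<alpha> d \<in> A" using aD that unfolding A_def by auto
    next
      assume "\<alpha> d \<in> A"
      then have "H.conn (?E - S) p (map_face \<alpha> \<sigma> (\<alpha> d))" unfolding A_def by auto
      then have "H.conn (?E - S) p (map_face \<alpha> \<sigma> d)" using H.conn_trans H.conn_sym[OF c] by blast
      then show "d \<in> A" using that unfolding A_def by auto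
    qed
  qed
  define DX where "DX = {d \<in> D. (d \<in> A) \<noteq> (\<alpha> d \<in> A)}"
  have DXD: "DX \<subseteq> D" unfolding DX_def by auto
  have DXa: "\<alpha> d \<in> DX" if "d \<in> DX" for d
    using that aa aD unfolding DX_def by auto
  have DXS: "{d, \<alpha> d} \<in> S" if "d \<in> DX" for d
    using that EA unfolding DX_def by blast
  have A0: "d0 \<in> A" using d0 pq H.conn_refl unfolding A_def by auto
  have A1: "d1 \<notin> A" using d1 pq unfolding A_def by auto
  have DXne: "DX \<noteq> {}"
  proof
    assume DX0: "DX = {}"
    have ac1: "\<forall>d\<in>A. \<alpha> d \<in> A" using DX0 unfolding DX_def A_def by auto
    have sc1: "\<forall>d\<in>A. \<sigma> d \<in> A"
    proof
      fix d assume "d \<in> A"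
      then have "\<alpha> d \<in> A" "d \<in> D" using ac1 unfolding A_def by auto
      then show "\<sigma> d \<in> A" using phiA[of "\<alpha> d"] aD aa by auto
    qed
    have "A \<subseteq> D" unfolding A_def by auto
    then have "A = {} \<or> A = D" using tr ac1 sc1 unfolding map_trans_def by blast
    then show False using A0 A1 d1 by auto
  qed
  have sw: "y \<in> DX \<longleftrightarrow> ((y \<in> A) \<noteq> (\<sigma> y \<in> A))" if "y \<in> D" for y
    using phiA[of "\<alpha> y"] aa aD that unfolding DX_def by auto
  define X where "X = (\<lambda>d. {d, \<alpha> d}) ` DX"
  define VX where "VX = map_vertex \<sigma> ` DX"
  have fDX: "finite DX" using finite_subset[OF DXD finD] .
  have fX: "finite X" "finite VX" unfolding X_def VX_def using fDX by auto
  have c1: "card DX = 2 * card X"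
  proof -
    have Ux: "\<Union>X = DX" unfolding X_def using DXa by auto
    have dj: "disjoint X" unfolding disjoint_def pairwise_def disjnt_def
    proof (intro ballI impI)
      fix x1 x2 assume x: "x1 \<in> X" "x2 \<in> X" "x1 \<noteq> x2"
      show "x1 \<inter> x2 = {}"
      proof (rule ccontr)
        assume "x1 \<inter> x2 \<noteq> {}"
        then obtain z where z: "z \<in> x1" "z \<in> x2" by auto
        obtain e1 where "e1 \<in> DX" "x1 = {e1, \<alpha> e1}" using x unfolding X_def by auto
        moreover obtain e2 where "e2 \<in> DX" "x2 = {e2, \<alpha> e2}" using x unfolding X_def by auto
        ultimately have "x1 = {z, \<alpha> z}" "x2 = {z, \<alpha> z}" using edge_rep[OF cm] z by metis+
        then show False using x by simp
      qed
    qed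
    have "card (\<Union>X) = sum card X" by (rule card_Union_disjoint[OF dj]) (use fX in \<open>auto simp: X_def\<close>)
    moreover have "sum card X = sum (\<lambda>_. 2) X"
    proof (rule sum.cong)
      fix x assume "x \<in> X"
      then obtain d where "d \<in> DX" "x = {d, \<alpha> d}" unfolding X_def by auto
      moreover have "\<alpha> d \<noteq> d" using anf DXD \<open>d \<in> DX\<close> by auto
      ultimately show "card x = 2" by auto
    qed simp
    ultimately show ?thesis using Ux by simp
  qed
  have c2: "2 * card VX \<le> card DX"
  proof -
    have U: "DX = (\<Union>v\<in>VX. v \<inter> DX)"
      unfolding VX_def map_vertex_def using permutation_self_in_orbit[OF ps] by auto
    have "card (\<Union>v\<in>VX. v \<inter> DX) = (\<Sum>v\<in>VX. card (v \<inter> DX))"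
    proof (rule card_UN_disjoint)
      show "finite VX" using fX by simp
      show "\<forall>v\<in>VX. finite (v \<inter> DX)" using fDX by auto
      show "\<forall>v\<in>VX. \<forall>w\<in>VX. v \<noteq> w \<longrightarrow> v \<inter> DX \<inter> (w \<inter> DX) = {}"
      proof (intro ballI impI)
        fix v w assume vw: "v \<in> VX" "w \<in> VX" "v \<noteq> w"
        obtain a where "v = orbit \<sigma> a" using vw unfolding VX_def map_vertex_def by auto
        moreover obtain b where "w = orbit \<sigma> b" using vw unfolding VX_def map_vertex_def by auto
        ultimately show "v \<inter> DX \<inter> (w \<inter> DX) = {}"
          using orbit_eq_of_mem[OF ps] vw(3) by blast
      qed
    qed
    moreover have "card (v \<inter> DX) \<ge> 2" if vV: "v \<in> VX" for v
    proof -
      obtain d where d: "d \<in> DX" "v = orbit \<sigma> d" using vV unfolding VX_def map_vertex_def by auto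
      have vD: "v \<subseteq> D" using orbit_sub_D[OF cm] d DXD by auto
      have fv: "finite v" using finite_subset[OF vD finD] .
      have inj: "inj_on \<sigma> v" using ps permutation_bijective bij_is_inj inj_on_subset by blast
      have "\<sigma> ` v \<subseteq> v" using d by (auto intro: orbit.step)
      then have img: "\<sigma> ` v = v" using endo_inj_surj[OF fv _ inj] by blast
      have eq: "v \<inter> DX = {y \<in> v. (y \<in> A) \<noteq> (\<sigma> y \<in> A)}" using sw vD by auto
      have ev: "even (card (v \<inter> DX))" unfolding eq by (rule parity_switch[OF fv img inj])
      have "d \<in> v \<inter> DX" using d permutation_self_in_orbit[OF ps] by auto
      then have "card (v \<inter> DX) \<noteq> 0" using fv by auto
      then show ?thesis using ev by presburger
    qed
    then have "(\<Sum>v\<in>VX. 2) \<le> (\<Sum>v\<in>VX. card (v \<inter> DX))" by (rule sum_mono)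
    ultimately show ?thesis using U by simp
  qed
  have c3: "card X + 1 \<le> card VX"
  proof -
    have wf: "\<exists>u\<in>VX. \<exists>v\<in>VX. primal_ends \<sigma> x = {u, v}" if xX: "x \<in> X" for x
    proof -
      obtain d where "d \<in> DX" "x = {d, \<alpha> d}" using xX unfolding X_def by auto
      then show ?thesis using DXa unfolding primal_ends_def VX_def by auto
    qed
    interpret K: mgraph VX X "primal_ends \<sigma>"
      by (unfold_locales) (use fX wf in auto)
    have VXV: "VX \<subseteq> map_vertices D \<sigma>" unfolding VX_def map_vertices_def using DXD by auto
    have XS: "X \<subseteq> S" unfolding X_def using DXS by auto
    have "K.acyclic X"
      unfolding K.acyclic_def
    proof
      assume "\<exists>vs es. is_cycle VX X (primal_ends \<sigma>) vs es"
      then obtain vs es where "is_cycle VX X (primal_ends \<sigma>) vs es" by blast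
      then have "is_cycle (map_vertices D \<sigma>) S (primal_ends \<sigma>) vs es" using cycle_mono VXV XS by blast
      then show False using ac unfolding G.acyclic_def by blast
    qed
    moreover have "VX \<noteq> {}" using DXne unfolding VX_def by auto
    ultimately show ?thesis using K.acyclic_card[of X] by auto
  qed
  show False using c1 c2 c3 by linarith
qed


lemma (in mgraph) acyclic_no_loop:
  assumes "acyclic S" "y \<in> S" "ends y = {w, w'}" "w \<in> V" "w = w'"
  shows False
proof -
  have "is_cycle V S ends [w, w] [y]"
    using assms unfolding is_cycle_def is_walk_def by (auto simp: less_Suc_eq)
  then show False using assms(1) unfolding acyclic_def by blast
qed

lemma tree_dual:
  assumes pg: "plane_graph D \<alpha> \<sigma>"
    and T: "spanning_tree (map_vertices D \<sigma>) (map_edges D \<alpha>) (primal_ends \<sigma>) T"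
  shows "spanning_tree (map_faces D \<alpha> \<sigma>) (map_edges D \<alpha>) (dual_ends \<alpha> \<sigma>) (map_edges D \<alpha> - T)"
proof -
  have cm: "comb_map D \<alpha> \<sigma>" and gc: "graph_connected (map_vertices D \<sigma>) (map_edges D \<alpha>) (primal_ends \<sigma>)"
    and eu: "int (card (map_vertices D \<sigma>)) - int (card (map_edges D \<alpha>)) + int (card (map_faces D \<alpha> \<sigma>)) = 2"
    using pg unfolding plane_graph_def by auto
  interpret G: mgraph "map_vertices D \<sigma>" "map_edges D \<alpha>" "primal_ends \<sigma>"
    by (rule primal_mgraph[OF cm])
  interpret H: mgraph "map_faces D \<alpha> \<sigma>" "map_edges D \<alpha>" "dual_ends \<alpha> \<sigma>"
    by (rule dual_mgraph[OF cm])
  have tr: "map_trans D \<alpha> \<sigma>" using connected_trans[OF cm gc] .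
  have TE: "T \<subseteq> map_edges D \<alpha>" and ac: "G.acyclic T" using T G.spanning_tree_iff by auto
  have conn: "\<forall>p\<in>map_faces D \<alpha> \<sigma>. \<forall>q\<in>map_faces D \<alpha> \<sigma>. H.conn (map_edges D \<alpha> - T) p q"
    using key[OF cm tr TE ac] .
  have Vne: "map_vertices D \<sigma> \<noteq> {}"
  proof
    assume "map_vertices D \<sigma> = {}"
    then have "D = {}" unfolding map_vertices_def by auto
    then show False using eu unfolding map_vertices_def map_edges_def map_faces_def by simp
  qed
  have ct: "card T + 1 = card (map_vertices D \<sigma>)" using G.tree_card[OF T Vne] .
  have "card (map_edges D \<alpha> - T) = card (map_edges D \<alpha>) - card T"
    using TE G.finE by (simp add: card_Diff_subset finite_subset)
  moreover have "card T \<le> card (map_edges D \<alpha>)" using TE G.finE card_mono by blast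
  ultimately have "card (map_edges D \<alpha> - T) + 1 = card (map_faces D \<alpha> \<sigma>)" using ct eu by linarith
  then show ?thesis using H.tree_by_card[of "map_edges D \<alpha> - T"] conn by auto
qed

lemma tree_primal:
  assumes pg: "plane_graph D \<alpha> \<sigma>"
    and P: "spanning_tree (map_faces D \<alpha> \<sigma>) (map_edges D \<alpha>) (dual_ends \<alpha> \<sigma>) P"
  shows "spanning_tree (map_vertices D \<sigma>) (map_edges D \<alpha>) (primal_ends \<sigma>) (map_edges D \<alpha> - P)"
proof -
  have cm: "comb_map D \<alpha> \<sigma>" and gc: "graph_connected (map_vertices D \<sigma>) (map_edges D \<alpha>) (primal_ends \<sigma>)"
    and eu: "int (card (map_vertices D \<sigma>)) - int (card (map_edges D \<alpha>)) + int (card (map_faces D \<alpha> \<sigma>)) = 2"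
    using pg unfolding plane_graph_def by auto
  interpret G: mgraph "map_vertices D \<sigma>" "map_edges D \<alpha>" "primal_ends \<sigma>"
    by (rule primal_mgraph[OF cm])
  interpret H: mgraph "map_faces D \<alpha> \<sigma>" "map_edges D \<alpha>" "dual_ends \<alpha> \<sigma>"
    by (rule dual_mgraph[OF cm])
  have tr: "map_trans D \<alpha> (\<sigma> \<circ> \<alpha>)" using trans_dual[OF cm connected_trans[OF cm gc]] .
  have PE: "P \<subseteq> map_edges D \<alpha>" and ac: "H.acyclic P" using P H.spanning_tree_iff by auto
  have ac': "mgraph.acyclic (map_vertices D (\<sigma> \<circ> \<alpha>)) (primal_ends (\<sigma> \<circ> \<alpha>)) P"
    using ac by (simp only: dual_vertices dual_pends)
  have k: "\<forall>p\<in>map_faces D \<alpha> (\<sigma> \<circ> \<alpha>). \<forall>q\<in>map_faces D \<alpha> (\<sigma> \<circ> \<alpha>).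
           mgraph.conn (map_faces D \<alpha> (\<sigma> \<circ> \<alpha>)) (dual_ends \<alpha> (\<sigma> \<circ> \<alpha>)) (map_edges D \<alpha> - P) p q"
    using key[OF cm_dual[OF cm] tr PE ac'] .
  have conn: "\<forall>p\<in>map_vertices D \<sigma>. \<forall>q\<in>map_vertices D \<sigma>. G.conn (map_edges D \<alpha> - P) p q"
    using k by (simp only: dual_faces[OF cm] dual_dends[OF cm])
  have Fne: "map_faces D \<alpha> \<sigma> \<noteq> {}"
  proof
    assume "map_faces D \<alpha> \<sigma> = {}"
    then have "D = {}" unfolding map_faces_def by auto
    then show False using eu unfolding map_vertices_def map_edges_def map_faces_def by simp
  qed
  have ct: "card P + 1 = card (map_faces D \<alpha> \<sigma>)" using H.tree_card[OF P Fne] .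
  have "card (map_edges D \<alpha> - P) = card (map_edges D \<alpha>) - card P"
    using PE G.finE by (simp add: card_Diff_subset finite_subset)
  moreover have "card P \<le> card (map_edges D \<alpha>)" using PE G.finE card_mono by blast
  ultimately have "card (map_edges D \<alpha> - P) + 1 = card (map_vertices D \<sigma>)" using ct eu by linarith
  then show ?thesis using G.tree_by_card[of "map_edges D \<alpha> - P"] conn by auto
qed


lemma (in mgraph) wf_obtain:
  assumes "x \<in> E"
  obtains u v where "ends x = {u, v}" "u \<in> V" "v \<in> V"
proof -
  from wf[OF assms] obtain u where "u \<in> V" "\<exists>v\<in>V. ends x = {u, v}" by (rule bexE)
  moreover from this(2) obtain v where "v \<in> V" "ends x = {u, v}" by (rule bexE)
  ultimately show ?thesis using that by simp
qed

lemma fc_mem: "e \<in> fundamental_cycle V ends T f \<longleftrightarrow> e = f \<or> (\<exists>u v. ends f = {u, v} \<and> e \<in> tree_path_edges V T ends u v)"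
  unfolding fundamental_cycle_def by blast

theorem mainTheorem12:
  fixes D :: "'d set" and \<alpha> \<sigma> :: "'d \<Rightarrow> 'd" and e :: "'d set"
  assumes "plane_graph D \<alpha> \<sigma>"
    and "simple_map D \<alpha> \<sigma>"
    and "e \<in> map_edges D \<alpha>"
  shows "(\<exists>T. spanning_tree (map_vertices D \<sigma>) (map_edges D \<alpha>) (primal_ends \<sigma>) T \<and>
             (\<forall>f \<in> map_edges D \<alpha> - T.
                e \<in> fundamental_cycle (map_vertices D \<sigma>) (primal_ends \<sigma>) T f))
     \<longleftrightarrow>
         (\<exists>vs es. is_hamiltonian_cycle (map_faces D \<alpha> \<sigma>) (map_edges D \<alpha>) (dual_ends \<alpha> \<sigma>) vs es
             \<and> e \<in> set es)"
proof -
  note pg = assms(1) and sm = assms(2) and eE = assms(3)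
  have cm: "comb_map D \<alpha> \<sigma>"
    and eu: "int (card (map_vertices D \<sigma>)) - int (card (map_edges D \<alpha>)) + int (card (map_faces D \<alpha> \<sigma>)) = 2"
    using pg unfolding plane_graph_def by auto
  interpret G: mgraph "map_vertices D \<sigma>" "map_edges D \<alpha>" "primal_ends \<sigma>"
    by (rule primal_mgraph[OF cm])
  interpret H: mgraph "map_faces D \<alpha> \<sigma>" "map_edges D \<alpha>" "dual_ends \<alpha> \<sigma>"
    by (rule dual_mgraph[OF cm])
  let ?V = "map_vertices D \<sigma>" and ?E = "map_edges D \<alpha>" and ?F = "map_faces D \<alpha> \<sigma>"
  let ?pe = "primal_ends \<sigma>" and ?de = "dual_ends \<alpha> \<sigma>"
  have Dne: "D \<noteq> {}"
  proof
    assume "D = {}"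
    then show False using eu unfolding map_vertices_def map_edges_def map_faces_def by simp
  qed
  have Fne: "?F \<noteq> {}" and Vne: "?V \<noteq> {}" using Dne unfolding map_faces_def map_vertices_def by auto
  have fc_iff: "e \<in> fundamental_cycle ?V ?pe T f \<longleftrightarrow> e = f \<or> (\<exists>u v. ?pe f = {u, v} \<and> e \<in> T \<and> \<not> G.conn (T - {e}) u v)"
    if T: "spanning_tree ?V ?E ?pe T" and fE: "f \<in> ?E" for T f
  proof -
    have i: "e \<in> tree_path_edges ?V T ?pe u v \<longleftrightarrow> e \<in> T \<and> \<not> G.conn (T - {e}) u v" if uv: "?pe f = {u, v}" for u v
    proof -
      have "u \<in> ?V" "v \<in> ?V" using G.ends_V[OF fE uv] by auto
      from G.tree_path_edges_eq[OF T this] show ?thesis by simp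
    qed
    show ?thesis
    proof
      assume "e \<in> fundamental_cycle ?V ?pe T f"
      then have "e = f \<or> (\<exists>u v. ?pe f = {u, v} \<and> e \<in> tree_path_edges ?V T ?pe u v)" by (simp only: fc_mem)
      then show "e = f \<or> (\<exists>u v. ?pe f = {u, v} \<and> e \<in> T \<and> \<not> G.conn (T - {e}) u v)"
      proof
        assume "\<exists>u v. ?pe f = {u, v} \<and> e \<in> tree_path_edges ?V T ?pe u v"
        then obtain u v where uv: "?pe f = {u, v}" and "e \<in> tree_path_edges ?V T ?pe u v" by iprover
        then have "e \<in> T \<and> \<not> G.conn (T - {e}) u v" using i[OF uv] by simp
        then show ?thesis using uv by iprover
      qed simp
    next
      assume "e = f \<or> (\<exists>u v. ?pe f = {u, v} \<and> e \<in> T \<and> \<not> G.conn (T - {e}) u v)"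
      then have "e = f \<or> (\<exists>u v. ?pe f = {u, v} \<and> e \<in> tree_path_edges ?V T ?pe u v)"
      proof
        assume "\<exists>u v. ?pe f = {u, v} \<and> e \<in> T \<and> \<not> G.conn (T - {e}) u v"
        then obtain u v where uv: "?pe f = {u, v}" and "e \<in> T \<and> \<not> G.conn (T - {e}) u v" by iprover
        then have "e \<in> tree_path_edges ?V T ?pe u v" using i[OF uv] by simp
        then show ?thesis using uv by iprover
      qed simp
      then show "e \<in> fundamental_cycle ?V ?pe T f" by (simp only: fc_mem)
    qed
  qed
  have cardT: "card (insert f (T - {x})) = card T" if "x \<in> T" "f \<notin> T" "finite T" for x f T
  proof -
    have "0 < card T" using that card_gt_0_iff by blast
    then show ?thesis using that by (simp add: card_Diff_singleton)
  qed
  have finE: "finite ?E" using G.finE .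
  show ?thesis
  proof
    assume "\<exists>T. spanning_tree ?V ?E ?pe T \<and> (\<forall>f \<in> ?E - T. e \<in> fundamental_cycle ?V ?pe T f)"
    then obtain T where T: "spanning_tree ?V ?E ?pe T" and fc: "\<forall>f \<in> ?E - T. e \<in> fundamental_cycle ?V ?pe T f"
      by blast
    have TE: "T \<subseteq> ?E" and Tc: "\<forall>a\<in>?V. \<forall>b\<in>?V. G.conn T a b" and Tac: "G.acyclic T"
      using T G.spanning_tree_iff by auto
    have fT: "finite T" using TE finE finite_subset by blast
    have ctT: "card T + 1 = card ?V" using G.tree_card[OF T Vne] .
    have Ts: "spanning_tree ?F ?E ?de (?E - T)" using tree_dual[OF pg T] .
    have Tsc: "\<forall>a\<in>?F. \<forall>b\<in>?F. H.conn (?E - T) a b" and Tsac: "H.acyclic (?E - T)"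
      using Ts H.spanning_tree_iff by auto
    have fc': "e \<in> T \<and> (\<exists>u v. ?pe f = {u, v} \<and> \<not> G.conn (T - {e}) u v)" if fT': "f \<in> ?E - T" and fne: "f \<noteq> e" for f
    proof -
      have fE: "f \<in> ?E" using fT' by simp
      have "e \<in> fundamental_cycle ?V ?pe T f" using fc fT' by (rule bspec)
      then have "e = f \<or> (\<exists>u v. ?pe f = {u, v} \<and> e \<in> T \<and> \<not> G.conn (T - {e}) u v)"
        using iffD1[OF fc_iff[OF T fE]] by iprover
      then have "\<exists>u v. ?pe f = {u, v} \<and> e \<in> T \<and> \<not> G.conn (T - {e}) u v" using fne by iprover
      then show ?thesis by iprover
    qed
    have swap: "spanning_tree ?F ?E ?de (?E - insert f (T - {x}))"
      if x: "x \<in> T" and f: "f \<in> ?E - T" and uv: "?pe f = {u, v}" and nc: "\<not> G.conn (T - {x}) u v" for x f u v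
    proof -
      have xE: "x \<in> ?E" using x TE by (rule subsetD[rotated])
      obtain a b where ab: "?pe x = {a, b}" by (rule G.wf_obtain[OF xE])
      have "\<forall>w\<in>?V. \<forall>z\<in>?V. G.conn (insert f (T - {x})) w z"
        using G.exchange[OF T x ab, of f u v] f uv nc by auto
      moreover have "insert f (T - {x}) \<subseteq> ?E" using f TE by auto
      moreover have "card (insert f (T - {x})) + 1 = card ?V" using cardT[OF x _ fT, of f] f ctT by auto
      ultimately have "spanning_tree ?V ?E ?pe (insert f (T - {x}))" using G.tree_by_card by blast
      then show ?thesis using tree_dual[OF pg] by blast
    qed
    show "\<exists>vs es. is_hamiltonian_cycle ?F ?E ?de vs es \<and> e \<in> set es"
    proof (cases "e \<in> T")
      case True
      obtain a b where ab: "?de e = {a, b}" "a \<in> ?F" "b \<in> ?F" by (rule H.wf_obtain[OF eE])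
      have sep: "\<not> H.conn ((?E - T) - {f}) a b" if f: "f \<in> ?E - T" for f
      proof -
        have "f \<noteq> e" using f True by auto
        then have "\<exists>u v. ?pe f = {u, v} \<and> \<not> G.conn (T - {e}) u v" using fc'[OF f] by iprover
        then obtain u v where uv: "?pe f = {u, v}" "\<not> G.conn (T - {e}) u v" by iprover
        have st: "spanning_tree ?F ?E ?de (?E - insert f (T - {e}))" using swap[OF True f uv] .
        have eq: "?E - insert f (T - {e}) = insert e ((?E - T) - {f})" using True eE TE f by auto
        have c: "\<forall>w\<in>?F. \<forall>z\<in>?F. H.conn (insert e ((?E - T) - {f})) w z"
          using st unfolding eq H.spanning_tree_iff by blast
        have fE: "f \<in> ?E" using f by simp
        obtain a' b' where ab': "?de f = {a', b'}" by (rule H.wf_obtain[OF fE])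
        show ?thesis using H.exchange[OF Ts f ab' eE _ ab(1)] True c by auto
      qed
      have "H.conn (?E - T) a b" using Tsc ab(2,3) by simp
      then obtain vs es where p: "is_path ?F (?E - T) ?de a b vs es" using H.conn_path by iprover
      have w: "is_walk ?F (?E - T) ?de vs es" and h: "hd vs = a" "last vs = b" "distinct vs"
        using p unfolding is_path_def by auto
      have se: "set es = ?E - T" using H.tree_path_set[OF Ts p] sep by auto
      have de: "distinct es" using walk_distinct_edges[OF w h(3)] .
      have l: "length vs = Suc (length es)" and svF: "set vs \<subseteq> ?F" using w unfolding is_walk_def by auto
      have ctTs: "card (?E - T) + 1 = card ?F" using H.tree_card[OF Ts Fne] .
      have "length es = card (?E - T)" using distinct_card[OF de] se by simp
      then have "card (set vs) = card ?F" using distinct_card[OF h(3)] l ctTs by simp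
      then have svF': "set vs = ?F" using card_subset_eq[OF H.finV svF] by simp
      have ne: "vs \<noteq> []" using l by auto
      have w2: "is_walk ?F ?E ?de (vs @ [a]) (es @ [e])"
        by (rule walk_snoc[OF walk_mono[OF w order.refl, of ?E]]) (use ab h eE in \<open>auto simp: insert_commute\<close>)
      have "e \<notin> set es" using se True by auto
      then have "is_hamiltonian_cycle ?F ?E ?de (vs @ [a]) (es @ [e])"
        unfolding is_hamiltonian_cycle_def is_cycle_def using w2 h ne de svF' ab by auto
      moreover have "e \<in> set (es @ [e])" by simp
      ultimately show ?thesis by blast
    next
      case False
      have ET: "?E - T = {e}"
      proof
        show "?E - T \<subseteq> {e}"
        proof
          fix f assume f: "f \<in> ?E - T"
          show "f \<in> {e}"
          proof (rule ccontr)
            assume "f \<notin> {e}"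
            then have "f \<noteq> e" by simp
            then show False using fc'[OF f] False by iprover
          qed
        qed
        show "{e} \<subseteq> ?E - T" using False eE by auto
      qed
      obtain d where d: "d \<in> D" "e = {d, \<alpha> d}" using eE unfolding map_edges_def by auto
      define u where "u = map_vertex \<sigma> d"
      define v where "v = map_vertex \<sigma> (\<alpha> d)"
      have uv: "?pe e = {u, v}" unfolding u_def v_def primal_ends_def d by auto
      have unv: "u \<noteq> v" using sm d unfolding simple_map_def u_def v_def by auto
      have uvV: "u \<in> ?V" "v \<in> ?V" using G.ends_V[OF eE uv] by auto
      have "G.conn T u v" using Tc uvV by simp
      then obtain ps pes where pp: "is_path ?V T ?pe u v ps pes" using G.conn_path by iprover
      have pw: "is_walk ?V T ?pe ps pes" and ph: "hd ps = u" "last ps = v"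
        using pp unfolding is_path_def by auto
      have "pes \<noteq> []"
      proof
        assume "pes = []"
        then have "length ps = 1" using pw unfolding is_walk_def by auto
        then have "hd ps = last ps" by (cases ps) auto
        then show False using ph unv by simp
      qed
      then obtain x where xp: "x \<in> set pes" by (cases pes) auto
      have xT: "x \<in> T" and ncx: "\<not> G.conn (T - {x}) u v" using G.tree_path_set[OF T pp] xp by auto
      have eET: "e \<in> ?E - T" using eE False by auto
      have st: "spanning_tree ?F ?E ?de (?E - insert e (T - {x}))" using swap[OF xT eET uv ncx] .
      have eq: "?E - insert e (T - {x}) = {x}" using ET xT TE by auto
      have stx: "spanning_tree ?F ?E ?de {x}" using st eq by simp
      have ste: "spanning_tree ?F ?E ?de {e}" using Ts ET by simp
      have cF: "card ?F = 2" using H.tree_card[OF ste Fne] by simp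
      obtain a b where ab: "?de e = {a, b}" "a \<in> ?F" "b \<in> ?F" by (rule H.wf_obtain[OF eE])
      have xE: "x \<in> ?E" using xT TE by auto
      obtain c c' where cc: "?de x = {c, c'}" "c \<in> ?F" "c' \<in> ?F" by (rule H.wf_obtain[OF xE])
      have anb: "a \<noteq> b" using H.acyclic_no_loop[of "{e}" e a b] ste H.spanning_tree_iff ab by auto
      have cnc: "c \<noteq> c'" using H.acyclic_no_loop[of "{x}" x c c'] stx H.spanning_tree_iff cc by auto
      have Fab: "?F = {a, b}"
      proof -
        have "{a, b} \<subseteq> ?F" using ab by auto
        moreover have "card {a, b} = card ?F" using cF anb by simp
        ultimately show ?thesis using card_subset_eq[OF H.finV, of "{a, b}"] by simp
      qed
      have dex: "?de x = {b, a}" using cc cnc Fab anb by auto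
      have xne: "x \<noteq> e" using xT False by auto
      have "is_walk ?F ?E ?de [a, b, a] [e, x]"
        unfolding is_walk_def using ab dex eE xE by (auto simp: less_Suc_eq)
      then have "is_hamiltonian_cycle ?F ?E ?de [a, b, a] [e, x]"
        unfolding is_hamiltonian_cycle_def is_cycle_def using anb xne Fab by auto
      moreover have "e \<in> set [e, x]" by simp
      ultimately show ?thesis by blast
    qed
  next
    assume "\<exists>vs es. is_hamiltonian_cycle ?F ?E ?de vs es \<and> e \<in> set es"
    then obtain vs es where hc: "is_cycle ?F ?E ?de vs es" "set vs = ?F" and ein: "e \<in> set es"
      unfolding is_hamiltonian_cycle_def by blast
    have w: "is_walk ?F ?E ?de vs es" and ne: "es \<noteq> []" and cc: "last vs = hd vs" "distinct es" "distinct (butlast vs)"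
      using hc unfolding is_cycle_def by auto
    have l: "length vs = Suc (length es)" and esE: "set es \<subseteq> ?E" using w unfolding is_walk_def by auto
    have sb: "set (butlast vs) = set vs"
    proof -
      have vne: "vs \<noteq> []" using l by auto
      have bne: "butlast vs \<noteq> []" using l ne by (cases vs) auto
      have vs: "vs = butlast vs @ [last vs]" using vne by simp
      have "hd vs = hd (butlast vs)" using bne by (subst vs) simp
      then have "last vs \<in> set (butlast vs)" using cc(1) bne by simp
      then show ?thesis by (subst (2) vs) auto
    qed
    have cF: "card ?F = length es" using distinct_card[OF cc(3)] sb hc(2) l by simp
    have ptree: "spanning_tree ?F ?E ?de (set es - {y})" if "y \<in> set es" for y
    proof (rule H.tree_by_card)
      show "set es - {y} \<subseteq> ?E" using esE by auto
      show "\<forall>a\<in>?F. \<forall>b\<in>?F. H.conn (set es - {y}) a b" using H.cycle_minus_edge_conn[OF hc that] .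
      have "card (set es) = length es" using distinct_card[OF cc(2)] .
      moreover have "0 < length es" using ne by simp
      ultimately show "card (set es - {y}) + 1 = card ?F" using that cF
        by (simp add: card_Diff_singleton)
    qed
    define T where "T = ?E - (set es - {e})"
    have T: "spanning_tree ?V ?E ?pe T" unfolding T_def using tree_primal[OF pg ptree[OF ein]] .
    have eT: "e \<in> T" using eE unfolding T_def by auto
    have "\<forall>f \<in> ?E - T. e \<in> fundamental_cycle ?V ?pe T f"
    proof
      fix f assume f: "f \<in> ?E - T"
      then have fes: "f \<in> set es" "f \<noteq> e" "f \<notin> T" "f \<in> ?E" unfolding T_def by auto
      obtain u v where uv: "?pe f = {u, v}" by (rule G.wf_obtain[OF fes(4)])
      obtain a b where ab: "?pe e = {a, b}" by (rule G.wf_obtain[OF eE])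
      have st: "spanning_tree ?V ?E ?pe (?E - (set es - {f}))" using tree_primal[OF pg ptree[OF fes(1)]] .
      have eq: "?E - (set es - {f}) = insert f (T - {e})" unfolding T_def using fes esE ein by auto
      have "\<forall>w\<in>?V. \<forall>z\<in>?V. G.conn (insert f (T - {e})) w z"
        using st unfolding eq G.spanning_tree_iff by blast
      then have "\<not> G.conn (T - {e}) u v"
        using G.exchange[OF T eT ab, of f u v] fes uv by auto
      then have "\<exists>u v. ?pe f = {u, v} \<and> e \<in> T \<and> \<not> G.conn (T - {e}) u v" using uv eT by iprover
      then show "e \<in> fundamental_cycle ?V ?pe T f" using iffD2[OF fc_iff[OF T fes(4)]] by iprover
    qed
    then show "\<exists>T. spanning_tree ?V ?E ?pe T \<and> (\<forall>f \<in> ?E - T. e \<in> fundamental_cycle ?V ?pe T f)"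
      using T by blast
  qed
qed

end
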